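(* Let $\mathcal{A}^*$ be a graded-commutative differential graded algebra over a field $\mathbb{k}$ of characteristic zero, let $\mathcal{N}^*$ be a differential graded module over $\mathcal{A}^*$, and let $\xi_1,\xi_2\in\mathcal{A}^1$ be cocycles with $\xi_1-\xi_2=df$ for some $f\in\mathcal{A}^0$. Then the exact couples (and hence the spectral sequences) associated to $(\mathcal{N}^*,\xi_1)$ and to $(\mathcal{N}^*,\xi_2)$ by the construction described in the context are isomorphic. In other words, the deformation spectral sequence depends only on the cohomology class of $\xi$.
   Context: A differential graded module (DGM) $\mathcal{N}^*$ over $\mathcal{A}^*$ is a graded $\mathcal{A}^*$-module with a differential $d$ of degree $+1$ satisfying the Leibniz rule with respect to the pairing $\mathcal{A}^*\times\mathcal{N}^*\to\mathcal{N}^*$. For a cocycle $\xi\in\mathcal{A}^1$, let $\mathcal{N}^*[[t]]$ be the graded module of formal power series in $t$ with coefficients in $\mathcal{N}^*$ (degree-$k$ part: series with coefficients in $\mathcal{N}^k$), endowed with the differential $D_t x=dx+t\xi x$. The short exact sequence of DGMs $0\to\mathcal{N}^*[[t]]\xrightarrow{t}\mathcal{N}^*[[t]]\xrightarrow{\pi}\mathcal{N}^*\to 0$ (with $\pi$ setting $t=0$) induces a long exact sequence in cohomology, regarded as an exact couple $(D,E,i,j,k)$ with $D=H^*(\mathcal{N}^*[[t]],D_t)$, $E=H^*(\mathcal{N}^*,d)$, $i$ = multiplication by $t$, $j=\pi_*$, $k$ = the connecting homomorphism. Its spectral sequence is the one obtained by iterating Massey's derived couple construction ($E'=\mathrm{Ker}(jk)/\mathrm{Im}(jk)$,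 $D'=i(D)$, with induced maps). *)

theory Defs
  imports Complex_Main "HOL-Library.Function_Algebras"
begin

text \<open>A graded k-vector space V^* is modelled inside an ambient k-vector space
(type 'v with scalar multiplication s) by a family of subspaces V p (p a natural
number), pairwise intersecting trivially (so their sum is direct).\<close>

definition graded_vs :: "('k::field \<Rightarrow> 'v::ab_group_add \<Rightarrow> 'v) \<Rightarrow> (nat \<Rightarrow> 'v set) \<Rightarrow> bool" where
  "graded_vs s V \<longleftrightarrow> vector_space s \<and> (\<forall>p. 0 \<in> V p \<and> (\<forall>x\<in>V p. \<forall>y\<in>V p. x + y \<in> V p) \<and> (\<forall>c. \<forall>x\<in>V p. s c x \<in> V p)) \<and>
     (\<forall>p q. p \<noteq> q \<longrightarrow> V p \<inter> V q = {0})"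

definition cdga ::
  "('k::field_char_0 \<Rightarrow> 'a::ab_group_add \<Rightarrow> 'a) \<Rightarrow> (nat \<Rightarrow> 'a set) \<Rightarrow>
   ('a \<Rightarrow> 'a \<Rightarrow> 'a) \<Rightarrow> 'a \<Rightarrow> ('a \<Rightarrow> 'a) \<Rightarrow> bool" where
  "cdga sA A mul one dA \<longleftrightarrow> graded_vs sA A \<and>
   (\<forall>p q. \<forall>a\<in>A p. \<forall>b\<in>A q. mul a b \<in> A (p + q)) \<and>
   (\<forall>p q. \<forall>a\<in>A p. \<forall>a'\<in>A p. \<forall>b\<in>A q. mul (a + a') b = mul a b + mul a' b) \<and>
   (\<forall>p q. \<forall>a\<in>A p. \<forall>b\<in>A q. \<forall>b'\<in>A q. mul a (b + b') = mul a b + mul a b') \<and>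
   (\<forall>p q c. \<forall>a\<in>A p. \<forall>b\<in>A q.
       mul (sA c a) b = sA c (mul a b) \<and> mul a (sA c b) = sA c (mul a b)) \<and>
   (\<forall>p q r. \<forall>a\<in>A p. \<forall>b\<in>A q. \<forall>e\<in>A r. mul (mul a b) e = mul a (mul b e)) \<and>
   one \<in> A 0 \<and> (\<forall>p. \<forall>a\<in>A p. mul one a = a \<and> mul a one = a) \<and>
   (\<forall>p q. \<forall>a\<in>A p. \<forall>b\<in>A q. mul a b = (if even (p * q) then mul b a else - mul b a)) \<and>
   (\<forall>p. \<forall>a\<in>A p. dA a \<in> A (Suc p)) \<and>
   (\<forall>p c. \<forall>a\<in>A p. \<forall>b\<in>A p. dA (a + b) = dA a + dA b \<and> dA (sA c a) = sA c (dA a)) \<and>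
   (\<forall>p. \<forall>a\<in>A p. dA (dA a) = 0) \<and>
   (\<forall>p q. \<forall>a\<in>A p. \<forall>b\<in>A q.
       dA (mul a b) = mul (dA a) b + (if even p then mul a (dA b) else - mul a (dA b)))"

definition dgm ::
  "('k::field \<Rightarrow> 'a::ab_group_add \<Rightarrow> 'a) \<Rightarrow> (nat \<Rightarrow> 'a set) \<Rightarrow>
   ('a \<Rightarrow> 'a \<Rightarrow> 'a) \<Rightarrow> 'a \<Rightarrow> ('a \<Rightarrow> 'a) \<Rightarrow>
   ('k \<Rightarrow> 'm::ab_group_add \<Rightarrow> 'm) \<Rightarrow> (nat \<Rightarrow> 'm set) \<Rightarrow> ('a \<Rightarrow> 'm \<Rightarrow> 'm) \<Rightarrow> ('m \<Rightarrow> 'm) \<Rightarrow> bool" where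
  "dgm sA A mul one dA sN N act dN \<longleftrightarrow> graded_vs sN N \<and>
   (\<forall>p q. \<forall>a\<in>A p. \<forall>x\<in>N q. act a x \<in> N (p + q)) \<and>
   (\<forall>p q. \<forall>a\<in>A p. \<forall>a'\<in>A p. \<forall>x\<in>N q. act (a + a') x = act a x + act a' x) \<and>
   (\<forall>p q. \<forall>a\<in>A p. \<forall>x\<in>N q. \<forall>x'\<in>N q. act a (x + x') = act a x + act a x') \<and>
   (\<forall>p q c. \<forall>a\<in>A p. \<forall>x\<in>N q.
       act (sA c a) x = sN c (act a x) \<and> act a (sN c x) = sN c (act a x)) \<and>
   (\<forall>p q r. \<forall>a\<in>A p. \<forall>b\<in>A q. \<forall>x\<in>N r. act (mul a b) x = act a (act b x)) \<and>
   (\<forall>q. \<forall>x\<in>N q. act one x = x) \<and>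
   (\<forall>q. \<forall>x\<in>N q. dN x \<in> N (Suc q)) \<and>
   (\<forall>q c. \<forall>x\<in>N q. \<forall>y\<in>N q. dN (x + y) = dN x + dN y \<and> dN (sN c x) = sN c (dN x)) \<and>
   (\<forall>q. \<forall>x\<in>N q. dN (dN x) = 0) \<and>
   (\<forall>p q. \<forall>a\<in>A p. \<forall>x\<in>N q.
       dN (act a x) = act (dA a) x + (if even p then act a (dN x) else - act a (dN x)))"

definition cocyc :: "(nat \<Rightarrow> 'v::ab_group_add set) \<Rightarrow> ('v \<Rightarrow> 'v) \<Rightarrow> nat \<Rightarrow> 'v set" where
  "cocyc C d k = {x \<in> C k. d x = 0}"

definition cobound :: "(nat \<Rightarrow> 'v::ab_group_add set) \<Rightarrow> ('v \<Rightarrow> 'v) \<Rightarrow> nat \<Rightarrow> 'v set" where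
  "cobound C d k = (if k = 0 then {0} else d ` C (k - 1))"

definition ccls :: "(nat \<Rightarrow> 'v::ab_group_add set) \<Rightarrow> ('v \<Rightarrow> 'v) \<Rightarrow> nat \<Rightarrow> 'v \<Rightarrow> 'v set" where
  "ccls C d k x = (\<lambda>b. x + b) ` cobound C d k"

definition coh :: "(nat \<Rightarrow> 'v::ab_group_add set) \<Rightarrow> ('v \<Rightarrow> 'v) \<Rightarrow> nat \<Rightarrow> 'v set set" where
  "coh C d k = ccls C d k ` cocyc C d k"

definition crep :: "'v set \<Rightarrow> 'v" where
  "crep X = (SOME x. x \<in> X)"

definition coh_add :: "(nat \<Rightarrow> 'v::ab_group_add set) \<Rightarrow> ('v \<Rightarrow> 'v) \<Rightarrow> nat \<Rightarrow> 'v set \<Rightarrow> 'v set \<Rightarrow> 'v set" where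
  "coh_add C d k X Y = ccls C d k (crep X + crep Y)"

definition coh_smul :: "('k \<Rightarrow> 'v::ab_group_add \<Rightarrow> 'v) \<Rightarrow> (nat \<Rightarrow> 'v set) \<Rightarrow> ('v \<Rightarrow> 'v) \<Rightarrow> nat \<Rightarrow> 'k \<Rightarrow> 'v set \<Rightarrow> 'v set" where
  "coh_smul s C d k c X = ccls C d k (s c (crep X))"

definition coh_map :: "(nat \<Rightarrow> 'w::ab_group_add set) \<Rightarrow> ('w \<Rightarrow> 'w) \<Rightarrow> nat \<Rightarrow> ('v \<Rightarrow> 'w) \<Rightarrow> 'v set \<Rightarrow> 'w set" where
  "coh_map C' d' k f X = ccls C' d' k (f (crep X))"

text \<open>Connecting homomorphism H^k(C) \<rightarrow> H^(k+1)(A) of a short exact sequence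
  0 \<rightarrow> A --alpha--> B --beta--> C \<rightarrow> 0 of complexes:
  [c] \<mapsto> [a] where beta b = c and alpha a = dB b.\<close>
definition coh_conn ::
  "(nat \<Rightarrow> 'u::ab_group_add set) \<Rightarrow> ('u \<Rightarrow> 'u) \<Rightarrow> (nat \<Rightarrow> 'v::ab_group_add set) \<Rightarrow> ('v \<Rightarrow> 'v) \<Rightarrow>
   ('u \<Rightarrow> 'v) \<Rightarrow> ('v \<Rightarrow> 'w) \<Rightarrow> nat \<Rightarrow> 'w set \<Rightarrow> 'u set" where
  "coh_conn CA dA CB dB alpha beta k X =
     ccls CA dA (Suc k)
       (SOME a. a \<in> CA (Suc k) \<and> (\<exists>b\<in>CB k. beta b = crep X \<and> alpha a = dB b))"

record ('d, 'e, 'k) vs_couple =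
  cD :: "nat \<Rightarrow> 'd set"
  cE :: "nat \<Rightarrow> 'e set"
  addD :: "nat \<Rightarrow> 'd \<Rightarrow> 'd \<Rightarrow> 'd"
  smulD :: "nat \<Rightarrow> 'k \<Rightarrow> 'd \<Rightarrow> 'd"
  addE :: "nat \<Rightarrow> 'e \<Rightarrow> 'e \<Rightarrow> 'e"
  smulE :: "nat \<Rightarrow> 'k \<Rightarrow> 'e \<Rightarrow> 'e"
  ci :: "nat \<Rightarrow> 'd \<Rightarrow> 'd"   \<comment> \<open>D^k \<rightarrow> D^k\<close>
  cj :: "nat \<Rightarrow> 'd \<Rightarrow> 'e"   \<comment> \<open>D^k \<rightarrow> E^k\<close>
  ck :: "nat \<Rightarrow> 'e \<Rightarrow> 'd"   \<comment> \<open>E^k \<rightarrow> D^(k+1)\<close>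

definition couple_iso :: "('d, 'e, 'k) vs_couple \<Rightarrow> ('d2, 'e2, 'k) vs_couple \<Rightarrow> bool" where
  "couple_iso C1 C2 \<longleftrightarrow> (\<exists>phiD phiE. \<forall>k.
     bij_betw (phiD k) (cD C1 k) (cD C2 k) \<and>
     bij_betw (phiE k) (cE C1 k) (cE C2 k) \<and>
     (\<forall>X\<in>cD C1 k. \<forall>Y\<in>cD C1 k. phiD k (addD C1 k X Y) = addD C2 k (phiD k X) (phiD k Y)) \<and>
     (\<forall>c. \<forall>X\<in>cD C1 k. phiD k (smulD C1 k c X) = smulD C2 k c (phiD k X)) \<and>
     (\<forall>X\<in>cE C1 k. \<forall>Y\<in>cE C1 k. phiE k (addE C1 k X Y) = addE C2 k (phiE k X) (phiE k Y)) \<and>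
     (\<forall>c. \<forall>X\<in>cE C1 k. phiE k (smulE C1 k c X) = smulE C2 k c (phiE k X)) \<and>
     (\<forall>X\<in>cD C1 k. phiD k (ci C1 k X) = ci C2 k (phiD k X)) \<and>
     (\<forall>X\<in>cD C1 k. phiE k (cj C1 k X) = cj C2 k (phiD k X)) \<and>
     (\<forall>Y\<in>cE C1 k. phiD (Suc k) (ck C1 k Y) = ck C2 k (phiE k Y)))"

text \<open>Degree-k part of N^*[[t]]: power series sum_n s(n) t^n with all s(n) in N^k.\<close>
definition ps_space :: "(nat \<Rightarrow> 'm set) \<Rightarrow> nat \<Rightarrow> (nat \<Rightarrow> 'm) set" where
  "ps_space N k = {s. \<forall>n. s n \<in> N k}"

text \<open>D_t s = d s + t xi s, coefficientwise.\<close>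
definition ps_diff :: "('a \<Rightarrow> 'm \<Rightarrow> 'm) \<Rightarrow> ('m::ab_group_add \<Rightarrow> 'm) \<Rightarrow> 'a \<Rightarrow> (nat \<Rightarrow> 'm) \<Rightarrow> (nat \<Rightarrow> 'm)" where
  "ps_diff act dN xi s = (\<lambda>n. dN (s n) + (if n = 0 then 0 else act xi (s (n - 1))))"

text \<open>Multiplication by t.\<close>
definition tshift :: "(nat \<Rightarrow> 'm::zero) \<Rightarrow> (nat \<Rightarrow> 'm)" where
  "tshift s = (\<lambda>n. if n = 0 then 0 else s (n - 1))"

text \<open>Setting t = 0.\<close>
definition ev0 :: "(nat \<Rightarrow> 'm) \<Rightarrow> 'm" where
  "ev0 s = s 0"

definition ps_smul :: "('k \<Rightarrow> 'm \<Rightarrow> 'm) \<Rightarrow> 'k \<Rightarrow> (nat \<Rightarrow> 'm) \<Rightarrow> (nat \<Rightarrow> 'm)" where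
  "ps_smul sN c s = (\<lambda>n. sN c (s n))"

text \<open>The exact couple (D, E, i, j, k) with D = H(N[[t]], D_t), E = H(N, d),
  i = multiplication by t, j = (t=0)_*, k = connecting homomorphism.\<close>
definition deformation_couple ::
  "('k \<Rightarrow> 'm::ab_group_add \<Rightarrow> 'm) \<Rightarrow> (nat \<Rightarrow> 'm set) \<Rightarrow> ('a \<Rightarrow> 'm \<Rightarrow> 'm) \<Rightarrow> ('m \<Rightarrow> 'm) \<Rightarrow> 'a \<Rightarrow>
   ((nat \<Rightarrow> 'm) set, 'm set, 'k) vs_couple" where
  "deformation_couple sN N act dN xi =
     (let PS = ps_space N; Dt = ps_diff act dN xi in
      \<lparr> cD = coh PS Dt,
        cE = coh N dN,
        addD = coh_add PS Dt,
        smulD = coh_smul (ps_smul sN) PS Dt,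
        addE = coh_add N dN,
        smulE = coh_smul sN N dN,
        ci = (\<lambda>k. coh_map PS Dt k tshift),
        cj = (\<lambda>k. coh_map N dN k ev0),
        ck = coh_conn PS Dt PS Dt tshift ev0 \<rparr>)"

end

theory Submission
  imports Defs
begin



locale cplx =
  fixes C :: "nat \<Rightarrow> 'v::ab_group_add set" and d :: "'v \<Rightarrow> 'v"
  assumes zero: "0 \<in> C k"
    and add: "x \<in> C k \<Longrightarrow> y \<in> C k \<Longrightarrow> x + y \<in> C k"
    and neg: "x \<in> C k \<Longrightarrow> - x \<in> C k"
    and dmap: "x \<in> C k \<Longrightarrow> d x \<in> C (Suc k)"
    and dadd: "x \<in> C k \<Longrightarrow> y \<in> C k \<Longrightarrow> d (x + y) = d x + d y"
    and dd: "x \<in> C k \<Longrightarrow> d (d x) = 0"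
begin

lemma diff: "x \<in> C k \<Longrightarrow> y \<in> C k \<Longrightarrow> x - y \<in> C k"
  using add[of x k "-y"] neg[of y k] by simp

lemma d0: "d 0 = 0"
  using dadd[of 0 0 0] zero[of 0] by simp

lemma dneg: "x \<in> C k \<Longrightarrow> d (- x) = - d x"
  using dadd[of x k "-x"] neg[of x k] d0 by (simp add: add_eq_0_iff)

lemma ddiff: "x \<in> C k \<Longrightarrow> y \<in> C k \<Longrightarrow> d (x - y) = d x - d y"
  using dadd[of x k "-y"] neg[of y k] dneg[of y k] by simp

lemma cob_Suc: "cobound C d (Suc k) = d ` C k"
  by (simp add: cobound_def)

lemma cob_0: "cobound C d 0 = {0}"
  by (simp add: cobound_def)

lemma cob_sub: "b \<in> cobound C d k \<Longrightarrow> b \<in> C k"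
  by (cases k) (auto simp: cobound_def zero dmap)

lemma cob_zero: "0 \<in> cobound C d k"
  by (cases k) (auto simp: cobound_def intro!: image_eqI[where x=0] zero d0[symmetric])

lemma cob_add: "a \<in> cobound C d k \<Longrightarrow> b \<in> cobound C d k \<Longrightarrow> a + b \<in> cobound C d k"
  by (cases k) (auto simp: cobound_def intro!: image_eqI dadd[symmetric] add)

lemma cob_neg: "a \<in> cobound C d k \<Longrightarrow> - a \<in> cobound C d k"
  by (cases k) (auto simp: cobound_def intro!: image_eqI dneg[symmetric] neg)

lemma cob_diff: "a \<in> cobound C d k \<Longrightarrow> b \<in> cobound C d k \<Longrightarrow> a - b \<in> cobound C d k"
  using cob_add[of a k "-b"] cob_neg[of b k] by simp

lemma cob_cocyc: "b \<in> cobound C d k \<Longrightarrow> b \<in> cocyc C d k"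
  by (cases k) (auto simp: cobound_def cocyc_def d0 zero dmap dd)

lemma ccls_eq: "x - y \<in> cobound C d k \<Longrightarrow> ccls C d k x = ccls C d k y"
proof -
  assume h: "x - y \<in> cobound C d k"
  have "x + b \<in> ccls C d k y" if "b \<in> cobound C d k" for b
    using cob_add[OF h that] unfolding ccls_def
    by (intro image_eqI[where x="x - y + b"]) (auto simp: algebra_simps)
  moreover have "y + b \<in> ccls C d k x" if "b \<in> cobound C d k" for b
    using cob_add[OF cob_neg[OF h] that] unfolding ccls_def
    by (intro image_eqI[where x="- (x - y) + b"]) (auto simp: algebra_simps)
  ultimately show ?thesis unfolding ccls_def by blast
qed

lemma crep_ccls: "crep (ccls C d k x) - x \<in> cobound C d k"
proof -
  have "x \<in> ccls C d k x" unfolding ccls_def using cob_zero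
    by (intro image_eqI[where x=0]) auto
  hence "crep (ccls C d k x) \<in> ccls C d k x" unfolding crep_def by (rule someI)
  then obtain b where "b \<in> cobound C d k" "crep (ccls C d k x) = x + b"
    unfolding ccls_def by auto
  thus ?thesis by simp
qed

lemma ccls_eqD: "ccls C d k x = ccls C d k y \<Longrightarrow> x - y \<in> cobound C d k"
proof -
  assume h: "ccls C d k x = ccls C d k y"
  have "x \<in> ccls C d k x" unfolding ccls_def using cob_zero
    by (intro image_eqI[where x=0]) auto
  then obtain b where "b \<in> cobound C d k" "x = y + b" using h unfolding ccls_def by auto
  thus ?thesis by simp
qed

lemma crep_ccls_eq: "ccls C d k (crep (ccls C d k x)) = ccls C d k x"
  by (rule ccls_eq[OF crep_ccls])

lemma cocyc_add: "x \<in> cocyc C d k \<Longrightarrow> y \<in> cocyc C d k \<Longrightarrow> x + y \<in> cocyc C d k"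
  by (auto simp: cocyc_def add dadd)

lemma coh_elem: "X \<in> coh C d k \<Longrightarrow> crep X \<in> cocyc C d k \<and> ccls C d k (crep X) = X"
proof -
  assume "X \<in> coh C d k"
  then obtain x where x: "x \<in> cocyc C d k" "X = ccls C d k x" by (auto simp: coh_def)
  have "crep X - x \<in> cocyc C d k" using crep_ccls[of k x] x cob_cocyc by simp
  hence "crep X - x + x \<in> cocyc C d k" by (rule cocyc_add) (rule x)
  thus ?thesis using x crep_ccls_eq by simp
qed

lemma coh_add_ccls: "coh_add C d k (ccls C d k a) (ccls C d k b) = ccls C d k (a + b)"
  unfolding coh_add_def
  apply (rule ccls_eq)
  using cob_add[OF crep_ccls[of k a] crep_ccls[of k b]] by (simp add: algebra_simps)

end

lemma coh_map_ccls:
  assumes c1: "cplx C d" and c2: "cplx C' d'" and a: "a \<in> C k"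
    and gadd: "\<And>x y. x \<in> C k \<Longrightarrow> y \<in> C k \<Longrightarrow> g (x + y) = g x + g y"
    and gb: "\<And>b. b \<in> cobound C d k \<Longrightarrow> g b \<in> cobound C' d' k"
  shows "coh_map C' d' k g (ccls C d k a) = ccls C' d' k (g a)"
proof -
  interpret c1: cplx C d by fact
  interpret c2: cplx C' d' by fact
  define b where "b = crep (ccls C d k a) - a"
  have b: "b \<in> cobound C d k" unfolding b_def by (rule c1.crep_ccls)
  have "g (crep (ccls C d k a)) = g a + g b"
    using gadd[OF a c1.cob_sub[OF b]] by (simp add: b_def)
  thus ?thesis unfolding coh_map_def
    by (intro c2.ccls_eq) (simp add: gb[OF b])
qed




locale ciso = c1: cplx C1 d1 + c2: cplx C2 d2
  for C1 :: "nat \<Rightarrow> 'v::ab_group_add set" and d1 and C2 :: "nat \<Rightarrow> 'w::ab_group_add set" and d2 +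
  fixes E :: "'v \<Rightarrow> 'w"
  assumes Emap: "x \<in> C1 k \<Longrightarrow> E x \<in> C2 k"
    and Eadd: "x \<in> C1 k \<Longrightarrow> y \<in> C1 k \<Longrightarrow> E (x + y) = E x + E y"
    and Ed: "x \<in> C1 k \<Longrightarrow> E (d1 x) = d2 (E x)"
    and Ebij: "bij_betw E (C1 k) (C2 k)"
begin

lemma E0: "E 0 = 0"
  using Eadd[of 0 0 0] c1.zero[of 0] by simp

lemma Eneg: "x \<in> C1 k \<Longrightarrow> E (- x) = - E x"
  using Eadd[of x k "-x"] c1.neg[of x k] E0 by (simp add: add_eq_0_iff)

lemma Ediff: "x \<in> C1 k \<Longrightarrow> y \<in> C1 k \<Longrightarrow> E (x - y) = E x - E y"
  using Eadd[of x k "-y"] c1.neg[of y k] Eneg[of y k] by simp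

lemma Ecob: "b \<in> cobound C1 d1 k \<Longrightarrow> E b \<in> cobound C2 d2 k"
  by (cases k) (auto simp: cobound_def E0 Ed intro!: Emap)

lemma phi_ccls: "x \<in> C1 k \<Longrightarrow> coh_map C2 d2 k E (ccls C1 d1 k x) = ccls C2 d2 k (E x)"
  by (rule coh_map_ccls[OF c1.cplx_axioms c2.cplx_axioms]) (auto simp: Eadd Ecob)

lemma Einj: "x \<in> C1 k \<Longrightarrow> y \<in> C1 k \<Longrightarrow> E x = E y \<Longrightarrow> x = y"
  using Ebij[of k] by (auto simp: bij_betw_def inj_on_def)

lemma Esurj: "z \<in> C2 k \<Longrightarrow> \<exists>x\<in>C1 k. z = E x"
  using Ebij[of k] by (auto simp: bij_betw_def)

lemma Ecocyc: "x \<in> cocyc C1 d1 k \<Longrightarrow> E x \<in> cocyc C2 d2 k"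
  by (auto simp: cocyc_def Emap Ed[symmetric] E0)

lemma phi_bij: "bij_betw (coh_map C2 d2 k E) (coh C1 d1 k) (coh C2 d2 k)"
proof (rule bij_betwI')
  fix X Y assume X: "X \<in> coh C1 d1 k" and Y: "Y \<in> coh C1 d1 k"
  obtain x where x: "x \<in> cocyc C1 d1 k" "X = ccls C1 d1 k x"
    using c1.coh_elem[OF X] by metis
  obtain y where y: "y \<in> cocyc C1 d1 k" "Y = ccls C1 d1 k y"
    using c1.coh_elem[OF Y] by metis
  have xC: "x \<in> C1 k" and yC: "y \<in> C1 k" using x y by (auto simp: cocyc_def)
  show "(coh_map C2 d2 k E X = coh_map C2 d2 k E Y) = (X = Y)"
  proof
    assume "coh_map C2 d2 k E X = coh_map C2 d2 k E Y"
    hence "ccls C2 d2 k (E x) = ccls C2 d2 k (E y)" using x y xC yC by (simp add: phi_ccls)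
    hence b: "E (x - y) \<in> cobound C2 d2 k" using c2.ccls_eqD Ediff[OF xC yC] by simp
    have "x - y \<in> cobound C1 d1 k"
    proof (cases k)
      case 0 thus ?thesis using b E0 Einj[OF c1.diff[OF xC yC] c1.zero] by (simp add: cobound_def)
    next
      case (Suc j)
      then obtain w where w: "w \<in> C2 j" "E (x - y) = d2 w" using b by (auto simp: cobound_def)
      obtain v where v: "v \<in> C1 j" "w = E v" using Esurj[OF w(1)] by auto
      have "x - y = d1 v" using Einj[of "x - y" k "d1 v"] c1.diff[OF xC yC] c1.dmap[OF v(1)] w v Ed[OF v(1)] Suc
        by simp
      thus ?thesis using Suc v by (auto simp: cobound_def)
    qed
    thus "X = Y" using x y c1.ccls_eq by simp
  qed simp
next
  fix X assume X: "X \<in> coh C1 d1 k"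
  obtain x where x: "x \<in> cocyc C1 d1 k" "X = ccls C1 d1 k x"
    using c1.coh_elem[OF X] by metis
  have xC: "x \<in> C1 k" using x by (auto simp: cocyc_def)
  show "coh_map C2 d2 k E X \<in> coh C2 d2 k"
    using x xC by (auto simp: phi_ccls coh_def intro!: Ecocyc)
next
  fix Z assume Z: "Z \<in> coh C2 d2 k"
  obtain z where z: "z \<in> cocyc C2 d2 k" "Z = ccls C2 d2 k z"
    using c2.coh_elem[OF Z] by metis
  obtain v where v: "v \<in> C1 k" "z = E v" using Esurj z by (auto simp: cocyc_def)
  have "E (d1 v) = E 0" using z v Ed[OF v(1)] E0 by (simp add: cocyc_def)
  hence "d1 v = 0" using Einj[OF c1.dmap[OF v(1)] c1.zero] by simp
  hence vc: "v \<in> cocyc C1 d1 k" using v by (simp add: cocyc_def)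
  show "\<exists>X\<in>coh C1 d1 k. Z = coh_map C2 d2 k E X"
    using vc v z by (intro bexI[where x="ccls C1 d1 k v"]) (auto simp: phi_ccls coh_def)
qed

end



locale defm =
  fixes sA :: "'k::field_char_0 \<Rightarrow> 'a::ab_group_add \<Rightarrow> 'a"
    and A :: "nat \<Rightarrow> 'a set" and mul :: "'a \<Rightarrow> 'a \<Rightarrow> 'a" and one :: 'a and dA :: "'a \<Rightarrow> 'a"
    and sN :: "'k \<Rightarrow> 'm::ab_group_add \<Rightarrow> 'm"
    and N :: "nat \<Rightarrow> 'm set" and act :: "'a \<Rightarrow> 'm \<Rightarrow> 'm" and dN :: "'m \<Rightarrow> 'm"
    and xi1 xi2 f :: 'a
  assumes cdga: "cdga sA A mul one dA"
    and dgm: "dgm sA A mul one dA sN N act dN"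
    and xi1: "xi1 \<in> A 1" and dxi1: "dA xi1 = 0"
    and xi2: "xi2 \<in> A 1" and dxi2: "dA xi2 = 0"
    and fA: "f \<in> A 0" and fxi: "xi1 - xi2 = dA f"
begin

lemma gvA: "graded_vs sA A" using cdga unfolding cdga_def by (elim conjE) assumption
lemma gvN: "graded_vs sN N" using dgm unfolding dgm_def by (elim conjE) assumption
lemma vsA: "vector_space sA" using gvA unfolding graded_vs_def by (elim conjE) assumption
lemma vsN: "vector_space sN" using gvN unfolding graded_vs_def by (elim conjE) assumption

interpretation vA: vector_space sA by (rule vsA)
interpretation vN: vector_space sN by (rule vsN)

lemma gvN2: "\<forall>p. 0 \<in> N p \<and> (\<forall>x\<in>N p. \<forall>y\<in>N p. x + y \<in> N p) \<and> (\<forall>c. \<forall>x\<in>N p. sN c x \<in> N p)"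
  using gvN unfolding graded_vs_def by (elim conjE) assumption
lemma gvA2: "\<forall>p. 0 \<in> A p \<and> (\<forall>x\<in>A p. \<forall>y\<in>A p. x + y \<in> A p) \<and> (\<forall>c. \<forall>x\<in>A p. sA c x \<in> A p)"
  using gvA unfolding graded_vs_def by (elim conjE) assumption
lemma A0: "0 \<in> A p" using gvA2 by blast
lemma N0: "0 \<in> N p" using gvN2 by blast
lemma Nadd: "x \<in> N p \<Longrightarrow> y \<in> N p \<Longrightarrow> x + y \<in> N p" using gvN2 by blast
lemma Nsc: "x \<in> N p \<Longrightarrow> sN c x \<in> N p" using gvN2 by blast
lemma Nneg: "x \<in> N p \<Longrightarrow> - x \<in> N p" using Nsc[of x p "-1"] by simp
lemma Ndiff: "x \<in> N p \<Longrightarrow> y \<in> N p \<Longrightarrow> x - y \<in> N p" using Nadd[of x p "-y"] Nneg[of y p] by simp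
lemma Nsum: "(\<And>i. i \<in> S \<Longrightarrow> g i \<in> N p) \<Longrightarrow> sum g S \<in> N p"
  by (induct S rule: infinite_finite_induct) (auto simp: N0 Nadd)

lemma cdga_c: "\<forall>p q. \<forall>a\<in>A p. \<forall>b\<in>A q. mul a b = (if even (p * q) then mul b a else - mul b a)"
  using cdga unfolding cdga_def by (elim conjE) assumption
lemma mul_comm: "a \<in> A p \<Longrightarrow> b \<in> A q \<Longrightarrow> mul a b = (if even (p * q) then mul b a else - mul b a)"
  using cdga_c by blast
lemma cdga_d: "\<forall>p. \<forall>a\<in>A p. dA a \<in> A (Suc p)"
  using cdga unfolding cdga_def by (elim conjE) assumption
lemma dA_mem: "a \<in> A p \<Longrightarrow> dA a \<in> A (Suc p)" using cdga_d by blast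

lemma dgm1: "\<forall>p q. \<forall>a\<in>A p. \<forall>x\<in>N q. act a x \<in> N (p + q)"
  using dgm unfolding dgm_def by (elim conjE) assumption
lemma act_mem: "a \<in> A p \<Longrightarrow> x \<in> N q \<Longrightarrow> act a x \<in> N (p + q)"
  using dgm1 by blast
lemma dgm2: "\<forall>p q. \<forall>a\<in>A p. \<forall>a'\<in>A p. \<forall>x\<in>N q. act (a + a') x = act a x + act a' x"
  using dgm unfolding dgm_def by (elim conjE) assumption
lemma act_addl: "a \<in> A p \<Longrightarrow> a' \<in> A p \<Longrightarrow> x \<in> N q \<Longrightarrow> act (a + a') x = act a x + act a' x"
  using dgm2 by blast
lemma dgm3: "\<forall>p q. \<forall>a\<in>A p. \<forall>x\<in>N q. \<forall>x'\<in>N q. act a (x + x') = act a x + act a x'"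
  using dgm unfolding dgm_def by (elim conjE) assumption
lemma act_addr: "a \<in> A p \<Longrightarrow> x \<in> N q \<Longrightarrow> x' \<in> N q \<Longrightarrow> act a (x + x') = act a x + act a x'"
  using dgm3 by blast
lemma dgm4: "\<forall>p q c. \<forall>a\<in>A p. \<forall>x\<in>N q.
       act (sA c a) x = sN c (act a x) \<and> act a (sN c x) = sN c (act a x)"
  using dgm unfolding dgm_def by (elim conjE) assumption
lemma act_scr: "a \<in> A p \<Longrightarrow> x \<in> N q \<Longrightarrow> act a (sN c x) = sN c (act a x)"
  using dgm4 by blast
lemma dgm5: "\<forall>p q r. \<forall>a\<in>A p. \<forall>b\<in>A q. \<forall>x\<in>N r. act (mul a b) x = act a (act b x)"
  using dgm unfolding dgm_def by (elim conjE) assumption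
lemma act_mul: "a \<in> A p \<Longrightarrow> b \<in> A q \<Longrightarrow> x \<in> N r \<Longrightarrow> act (mul a b) x = act a (act b x)"
  using dgm5 by blast
lemma dgm6: "\<forall>q. \<forall>x\<in>N q. dN x \<in> N (Suc q)"
  using dgm unfolding dgm_def by (elim conjE) assumption
lemma dN_mem: "x \<in> N q \<Longrightarrow> dN x \<in> N (Suc q)" using dgm6 by blast
lemma dgm7: "\<forall>q c. \<forall>x\<in>N q. \<forall>y\<in>N q. dN (x + y) = dN x + dN y \<and> dN (sN c x) = sN c (dN x)"
  using dgm unfolding dgm_def by (elim conjE) assumption
lemma dN_add: "x \<in> N q \<Longrightarrow> y \<in> N q \<Longrightarrow> dN (x + y) = dN x + dN y" using dgm7 by blast
lemma dN_sc: "x \<in> N q \<Longrightarrow> dN (sN c x) = sN c (dN x)" using dgm7 by blast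
lemma dgm8: "\<forall>q. \<forall>x\<in>N q. dN (dN x) = 0"
  using dgm unfolding dgm_def by (elim conjE) assumption
lemma dNdN: "x \<in> N q \<Longrightarrow> dN (dN x) = 0" using dgm8 by blast
lemma dgm9: "\<forall>p q. \<forall>a\<in>A p. \<forall>x\<in>N q.
       dN (act a x) = act (dA a) x + (if even p then act a (dN x) else - act a (dN x))"
  using dgm unfolding dgm_def by (elim conjE) assumption
lemma dN_act: "a \<in> A p \<Longrightarrow> x \<in> N q \<Longrightarrow>
       dN (act a x) = act (dA a) x + (if even p then act a (dN x) else - act a (dN x))"
  using dgm9 by blast

lemma act_zr: "a \<in> A p \<Longrightarrow> act a 0 = 0"
  using act_addr[of a p 0 0 0] N0[of 0] by simp
lemma act_zl: "x \<in> N q \<Longrightarrow> act 0 x = 0"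
  using act_addl[of 0 0 0 x q] A0[of 0] by simp
lemma act_negr: "a \<in> A p \<Longrightarrow> x \<in> N q \<Longrightarrow> act a (- x) = - act a x"
  using act_addr[of a p x q "-x"] Nneg[of x q] act_zr[of a p] by (simp add: add_eq_0_iff)

lemma cplxN: "cplx N dN"
  by unfold_locales (auto simp: N0 Nadd Nneg dN_mem dN_add dNdN)

lemma dN0: "dN 0 = 0" using cplx.d0[OF cplxN] .

lemma mul_sq0: assumes "a \<in> A 1" shows "mul a a = 0"
proof -
  define m where "m = mul a a"
  have "m = - m" using mul_comm[OF assms assms] by (simp add: m_def)
  hence mm: "m + m = 0" by (metis add.right_inverse)
  have "sA (1+1) m = m + m" by (simp only: vA.scale_left_distrib vA.scale_one)
  hence "sA (1+1) m = 0" using mm by simp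
  hence "sA (inverse (1+1)) (sA (1+1) m) = 0" by simp
  hence "sA (inverse (1+1) * (1+1)) m = 0" by (simp only: vA.scale_scale)
  moreover have "inverse (1+1) * (1+1) = (1::'k)" by simp
  ultimately show ?thesis by (simp add: m_def)
qed

lemma cplxPS: assumes xi: "xi \<in> A 1" and dxi: "dA xi = 0"
  shows "cplx (ps_space N) (ps_diff act dN xi)"
proof
  fix k
  show "0 \<in> ps_space N k" by (simp add: ps_space_def N0)
  fix x assume x: "x \<in> ps_space N k"
  show "- x \<in> ps_space N k" using x by (simp add: ps_space_def Nneg)
  have am: "act xi (x n) \<in> N (Suc k)" for n using act_mem[OF xi, of "x n" k] x by (simp add: ps_space_def)
  show "ps_diff act dN xi x \<in> ps_space N (Suc k)"
    using x am by (auto simp: ps_space_def ps_diff_def Nadd dN_mem N0)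
  {
    fix y assume y: "y \<in> ps_space N k"
    show "x + y \<in> ps_space N k" using x y by (simp add: ps_space_def Nadd)
    show "ps_diff act dN xi (x + y) = ps_diff act dN xi x + ps_diff act dN xi y"
    proof -
      have xn: "x n \<in> N k" and yn: "y n \<in> N k" for n using x y by (auto simp: ps_space_def)
      show ?thesis by (auto simp: ps_diff_def dN_add[OF xn yn] act_addr[OF xi xn yn] fun_eq_iff algebra_simps)
    qed
  }
  have dact: "dN (act xi z) = - act xi (dN z)" if "z \<in> N k" for z
    using dN_act[OF xi that] dxi act_zl[of z k] that by simp
  have xx: "act xi (act xi z) = 0" if "z \<in> N k" for z
    using act_mul[OF xi xi that, symmetric] mul_sq0[OF xi] act_zl[OF that] by simp
  have dxm: "dN (x n) \<in> N (Suc k)" for n using x dN_mem by (simp add: ps_space_def)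
  have xm: "x n \<in> N k" for n using x by (simp add: ps_space_def)
  have "ps_diff act dN xi (ps_diff act dN xi x) n = 0" for n
  proof (cases n)
    case 0 thus ?thesis by (simp add: ps_diff_def dNdN[OF xm])
  next
    case (Suc m)
    have 1: "act xi (dN (x m)) \<in> N (Suc (Suc k))" using act_mem[OF xi dxm[of m]] by simp
    have 2: "act xi (x m) \<in> N (Suc k)" using act_mem[OF xi xm[of m]] by simp
    show ?thesis
    proof (cases m)
      case 0 thus ?thesis using Suc
        using dN_add[OF dxm[of n] 2] dNdN[OF xm[of n]] dact[OF xm[of m]] act_addr[OF xi dxm[of m] N0] act_zr[OF xi]
        by (simp add: ps_diff_def)
    next
      case (Suc j)
      have 3: "act xi (x j) \<in> N (Suc k)" using act_mem[OF xi xm[of j]] by simp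
      show ?thesis using Suc \<open>n = Suc m\<close>
        using dN_add[OF dxm[of n] 2] dNdN[OF xm[of n]] dact[OF xm[of m]] act_addr[OF xi dxm[of m] 3] xx[OF xm[of j]]
        by (simp add: ps_diff_def)
    qed
  qed
  thus "ps_diff act dN xi (ps_diff act dN xi x) = 0" by auto
qed

end



context defm begin

interpretation vA: vector_space sA by (rule vsA)
interpretation vN: vector_space sN by (rule vsN)

lemma dfA: "dA f \<in> A 1" using dA_mem[OF fA] by simp

lemma Fm: "x \<in> N q \<Longrightarrow> act f x \<in> N q" using act_mem[OF fA] by fastforce
lemma Fadd: "x \<in> N q \<Longrightarrow> y \<in> N q \<Longrightarrow> act f (x + y) = act f x + act f y" using act_addr[OF fA] .
lemma Fsc: "x \<in> N q \<Longrightarrow> act f (sN c x) = sN c (act f x)" using act_scr[OF fA] .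
lemma Fcomm: "g \<in> A p \<Longrightarrow> x \<in> N q \<Longrightarrow> act f (act g x) = act g (act f x)"
  using act_mul[OF fA, of g p x q] act_mul[of g p f 0 x q] fA mul_comm[OF fA, of g p] by simp

lemma Fp_mem: "x \<in> N q \<Longrightarrow> (act f ^^ k) x \<in> N q"
  by (induct k) (auto simp: Fm)
lemma Fp_add: assumes "x \<in> N q" "y \<in> N q" shows "(act f ^^ k) (x + y) = (act f ^^ k) x + (act f ^^ k) y"
  by (induct k) (simp_all add: Fadd[OF Fp_mem[OF assms(1)] Fp_mem[OF assms(2)]])
lemma Fp_sc: assumes "x \<in> N q" shows "(act f ^^ k) (sN c x) = sN c ((act f ^^ k) x)"
  by (induct k) (simp_all add: Fsc[OF Fp_mem[OF assms(1)]])
lemma Fp_comm: assumes "g \<in> A p" "x \<in> N q" shows "(act f ^^ k) (act g x) = act g ((act f ^^ k) x)"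
  by (induct k) (simp_all add: Fcomm[OF assms(1) Fp_mem[OF assms(2)]])

definition u :: "nat \<Rightarrow> 'm \<Rightarrow> 'm" where
  "u k x = sN (inverse (fact k)) ((act f ^^ k) x)"

lemma u_mem: "x \<in> N q \<Longrightarrow> u k x \<in> N q" by (simp add: u_def Nsc Fp_mem)
lemma u_add: "x \<in> N q \<Longrightarrow> y \<in> N q \<Longrightarrow> u k (x + y) = u k x + u k y"
  by (simp add: u_def Fp_add vN.scale_right_distrib)
lemma u_sc: "x \<in> N q \<Longrightarrow> u k (sN c x) = sN c (u k x)"
  by (simp add: u_def Fp_sc vN.scale_left_commute)
lemma u_zero: "u k 0 = 0"
  using u_add[of 0 0 0 k] N0[of 0] by simp
lemma u_neg: "x \<in> N q \<Longrightarrow> u k (- x) = - u k x"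
  using u_add[of x q "-x" k] Nneg[of x q] u_zero by (simp add: add_eq_0_iff)
lemma u_diff: "x \<in> N q \<Longrightarrow> y \<in> N q \<Longrightarrow> u k (x - y) = u k x - u k y"
  using u_add[of x q "-y" k] Nneg[of y q] u_neg[of y q k] by simp
lemma u0: "u 0 x = x" by (simp add: u_def)
lemma u_act: assumes "g \<in> A p" "x \<in> N q" shows "u k (act g x) = act g (u k x)"
  by (simp add: u_def Fp_comm[OF assms] act_scr[OF assms(1) Fp_mem[OF assms(2)]])
lemma u_sum: "(\<And>i. i \<in> S \<Longrightarrow> h i \<in> N q) \<Longrightarrow> u k (sum h S) = (\<Sum>i\<in>S. u k (h i))"
proof (induct S rule: infinite_finite_induct)
  case (insert i F)
  have "sum h F \<in> N q" using insert by (intro Nsum) auto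
  thus ?case using insert u_add[of "h i" q "sum h F" k] by simp
qed (auto simp: u_zero)

lemma dN_F: "x \<in> N q \<Longrightarrow> dN (act f x) = act (dA f) x + act f (dN x)"
  using dN_act[OF fA] by simp

lemma dN_Fp: "x \<in> N q \<Longrightarrow>
   dN ((act f ^^ Suc k) x) = (act f ^^ Suc k) (dN x) + sN (of_nat (Suc k)) (act (dA f) ((act f ^^ k) x))"
proof (induct k)
  case 0 thus ?case using dN_F[of x q] by (simp add: add.commute)
next
  case (Suc k)
  have y: "(act f ^^ Suc k) x \<in> N q" using Suc Fp_mem by blast
  have g: "act (dA f) ((act f ^^ k) x) \<in> N (Suc q)" using act_mem[OF dfA Fp_mem[OF Suc(2)]] by simp
  have dx: "(act f ^^ Suc k) (dN x) \<in> N (Suc q)" using Fp_mem dN_mem Suc(2) by blast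
  have "dN ((act f ^^ Suc (Suc k)) x) = act (dA f) ((act f ^^ Suc k) x) + act f (dN ((act f ^^ Suc k) x))"
    using dN_F[OF y] by simp
  also have "\<dots> = act (dA f) ((act f ^^ Suc k) x) + ((act f ^^ Suc (Suc k)) (dN x)
       + sN (of_nat (Suc k)) (act (dA f) ((act f ^^ Suc k) x)))"
    using Suc(1)[OF Suc(2)] Fadd[OF dx Nsc[OF g]] Fsc[OF g] Fcomm[OF dfA Fp_mem[OF Suc(2)]] by simp
  also have "\<dots> = (act f ^^ Suc (Suc k)) (dN x) + sN (of_nat (Suc (Suc k))) (act (dA f) ((act f ^^ Suc k) x))"
  proof -
    have "sN (of_nat (Suc (Suc k))) (act (dA f) ((act f ^^ Suc k) x)) =
       act (dA f) ((act f ^^ Suc k) x) + sN (of_nat (Suc k)) (act (dA f) ((act f ^^ Suc k) x))"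
      by (simp only: of_nat_Suc[of "Suc k"] vN.scale_left_distrib vN.scale_one)
    thus ?thesis by (simp only: add.left_commute)
  qed
  finally show ?case .
qed

lemma dN_u0: "x \<in> N q \<Longrightarrow> dN (u 0 x) = u 0 (dN x)" by (simp add: u0)

lemma dN_uS: "x \<in> N q \<Longrightarrow> dN (u (Suc k) x) = u (Suc k) (dN x) + act (dA f) (u k x)"
proof -
  assume x: "x \<in> N q"
  have g: "act (dA f) ((act f ^^ k) x) \<in> N (Suc q)" using act_mem[OF dfA Fp_mem[OF x]] by simp
  have "dN (u (Suc k) x) = sN (inverse (fact (Suc k))) (dN ((act f ^^ Suc k) x))"
    unfolding u_def using dN_sc[OF Fp_mem[OF x]] by blast
  also have "\<dots> = u (Suc k) (dN x) + sN (inverse (fact (Suc k)) * of_nat (Suc k)) (act (dA f) ((act f ^^ k) x))"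
    by (simp only: dN_Fp[OF x] u_def vN.scale_right_distrib vN.scale_scale)
  also have "inverse (fact (Suc k)) * of_nat (Suc k) = (inverse (fact k) :: 'k)"
  proof -
    have a: "(of_nat (Suc k)::'k) \<noteq> 0" by (rule of_nat_neq_0)
    have b: "(fact k :: 'k) \<noteq> 0" by simp
    have "(fact (Suc k)::'k) = of_nat (Suc k) * fact k" by (rule fact_Suc)
    thus ?thesis using a b by (simp add: inverse_mult_distrib del: of_nat_Suc)
  qed
  also have "sN (inverse (fact k)) (act (dA f) ((act f ^^ k) x)) = act (dA f) (u k x)"
    by (simp add: u_def act_scr[OF dfA Fp_mem[OF x]])
  finally show ?thesis .
qed

end



context defm begin

interpretation vN: vector_space sN by (rule vsN)

lemma lin_sum:
  assumes "\<And>x y. x \<in> N q \<Longrightarrow> y \<in> N q \<Longrightarrow> \<phi> (x + y) = \<phi> x + \<phi> y" "\<phi> 0 = 0"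
    "\<And>i. i \<in> S \<Longrightarrow> h i \<in> N q"
  shows "\<phi> (sum h S) = (\<Sum>i\<in>S. \<phi> (h i))"
  using assms(3)
proof (induct S rule: infinite_finite_induct)
  case (insert i F)
  have "sum h F \<in> N q" using insert by (intro Nsum) auto
  thus ?case using insert assms(1)[of "h i" "sum h F"] by simp
qed (auto simp: assms(2))

lemma dN_sum: "(\<And>i. i \<in> S \<Longrightarrow> h i \<in> N q) \<Longrightarrow> dN (sum h S) = (\<Sum>i\<in>S. dN (h i))"
  by (rule lin_sum[where q=q]) (auto simp: dN_add dN0)

lemma act_sum: "g \<in> A p \<Longrightarrow> (\<And>i. i \<in> S \<Longrightarrow> h i \<in> N q) \<Longrightarrow> act g (sum h S) = (\<Sum>i\<in>S. act g (h i))"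
  by (rule lin_sum[where q=q]) (auto simp: act_addr act_zr)

definition Eop :: "(nat \<Rightarrow> 'm) \<Rightarrow> (nat \<Rightarrow> 'm)" where
  "Eop s = (\<lambda>n. \<Sum>k\<le>n. u k (s (n - k)))"

lemma E_mem: "s \<in> ps_space N q \<Longrightarrow> Eop s \<in> ps_space N q"
  by (auto simp: ps_space_def Eop_def intro!: Nsum u_mem)

lemma E_add: "s \<in> ps_space N q \<Longrightarrow> t \<in> ps_space N q \<Longrightarrow> Eop (s + t) = Eop s + Eop t"
proof -
  assume s: "s \<in> ps_space N q" and t: "t \<in> ps_space N q"
  have sm: "s j \<in> N q" and tm: "t j \<in> N q" for j using s t by (auto simp: ps_space_def)
  show ?thesis by (simp add: Eop_def fun_eq_iff u_add[OF sm tm] sum.distrib)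
qed

lemma E_sc: "s \<in> ps_space N q \<Longrightarrow> Eop (ps_smul sN c s) = ps_smul sN c (Eop s)"
proof -
  assume s: "s \<in> ps_space N q"
  have sm: "s j \<in> N q" for j using s by (auto simp: ps_space_def)
  show ?thesis by (simp add: Eop_def ps_smul_def fun_eq_iff u_sc[OF sm] vN.scale_sum_right)
qed

lemma E_tshift: "Eop (tshift s) = tshift (Eop s)"
proof
  fix n show "Eop (tshift s) n = tshift (Eop s) n"
  proof (cases n)
    case 0 thus ?thesis by (simp add: Eop_def tshift_def u_zero)
  next
    case (Suc m)
    have "Eop (tshift s) n = (\<Sum>k\<le>m. u k (tshift s (Suc m - k))) + u (Suc m) (tshift s 0)"
      by (simp add: Eop_def Suc)
    also have "\<dots> = (\<Sum>k\<le>m. u k (s (m - k)))"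
      by (auto simp: tshift_def u_zero Suc_diff_le intro!: sum.cong)
    finally show ?thesis by (simp add: tshift_def Eop_def Suc)
  qed
qed

lemma E_ev0: "ev0 (Eop s) = ev0 s" by (simp add: Eop_def ev0_def u0)

lemma xi1_split: "x \<in> N q \<Longrightarrow> act xi1 x = act (dA f) x + act xi2 x"
proof -
  assume x: "x \<in> N q"
  have "xi1 = dA f + xi2" using fxi by (simp add: algebra_simps)
  thus ?thesis using act_addl[OF dfA xi2 x] by simp
qed

lemma E_chain:
  assumes s: "s \<in> ps_space N q"
  shows "Eop (ps_diff act dN xi1 s) = ps_diff act dN xi2 (Eop s)"
proof
  fix n
  have sm: "s j \<in> N q" for j using s by (simp add: ps_space_def)
  have dsm: "dN (s j) \<in> N (Suc q)" for j using dN_mem[OF sm] .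
  have x1m: "act xi1 (s j) \<in> N (Suc q)" for j using act_mem[OF xi1 sm[of j]] by simp
  have x2m: "act xi2 (u k (s j)) \<in> N (Suc q)" for k j using act_mem[OF xi2 u_mem[OF sm[of j]]] by simp
  have gm: "act (dA f) (u k (s j)) \<in> N (Suc q)" for k j using act_mem[OF dfA u_mem[OF sm[of j]]] by simp
  show "Eop (ps_diff act dN xi1 s) n = ps_diff act dN xi2 (Eop s) n"
  proof (cases n)
    case 0 thus ?thesis by (simp add: Eop_def ps_diff_def u0)
  next
    case (Suc m)
    have "Eop (ps_diff act dN xi1 s) n =
       (\<Sum>k\<le>Suc m. u k (dN (s (Suc m - k)))) +
       (\<Sum>k\<le>Suc m. u k (if Suc m - k = 0 then 0 else act xi1 (s (Suc m - k - 1))))"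
      unfolding Eop_def ps_diff_def Suc sum.distrib[symmetric]
      by (rule sum.cong) (auto simp: u_zero intro!: u_add[OF dsm] x1m N0)
    also have "(\<Sum>k\<le>Suc m. u k (if Suc m - k = 0 then 0 else act xi1 (s (Suc m - k - 1)))) =
        (\<Sum>k\<le>m. act (dA f) (u k (s (m - k))) + act xi2 (u k (s (m - k))))"
      by (auto simp: u_zero Suc_diff_le u_act[OF xi1 sm] xi1_split[OF u_mem[OF sm]] intro!: sum.cong)
    finally have L: "Eop (ps_diff act dN xi1 s) n = (\<Sum>k\<le>Suc m. u k (dN (s (Suc m - k)))) +
      ((\<Sum>k\<le>m. act (dA f) (u k (s (m - k)))) + (\<Sum>k\<le>m. act xi2 (u k (s (m - k)))))"
      by (simp add: sum.distrib)
    have "dN (Eop s n) = (\<Sum>k\<le>Suc m. dN (u k (s (Suc m - k))))"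
      unfolding Eop_def Suc by (rule dN_sum) (rule u_mem[OF sm])
    also have "\<dots> = dN (u 0 (s (Suc m))) + (\<Sum>k\<le>m. dN (u (Suc k) (s (m - k))))"
      by (simp only: sum.atMost_Suc_shift) simp
    also have "\<dots> = u 0 (dN (s (Suc m))) + (\<Sum>k\<le>m. u (Suc k) (dN (s (m - k))))
        + (\<Sum>k\<le>m. act (dA f) (u k (s (m - k))))"
      by (simp add: dN_u0[OF sm] dN_uS[OF sm] sum.distrib add.assoc)
    also have "u 0 (dN (s (Suc m))) + (\<Sum>k\<le>m. u (Suc k) (dN (s (m - k)))) =
        (\<Sum>k\<le>Suc m. u k (dN (s (Suc m - k))))"
      by (simp only: sum.atMost_Suc_shift) simp
    finally have R1: "dN (Eop s n) = (\<Sum>k\<le>Suc m. u k (dN (s (Suc m - k)))) +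
        (\<Sum>k\<le>m. act (dA f) (u k (s (m - k))))" .
    have R2: "act xi2 (Eop s m) = (\<Sum>k\<le>m. act xi2 (u k (s (m - k))))"
      unfolding Eop_def by (rule act_sum[OF xi2]) (rule u_mem[OF sm])
    show ?thesis using L R1 R2 Suc by (simp add: ps_diff_def add.assoc)
  qed
qed

end



context defm begin

lemma E_shift: "Eop s n = s n + (\<Sum>k<n. u (Suc k) (s (n - Suc k)))"
  unfolding Eop_def by (simp only: sum.atMost_shift u0) simp

lemma E_inj: assumes "s \<in> ps_space N q" "t \<in> ps_space N q" "Eop s = Eop t" shows "s = t"
proof
  fix n show "s n = t n"
  proof (induct n rule: less_induct)
    case (less n)
    have "(\<Sum>k<n. u (Suc k) (s (n - Suc k))) = (\<Sum>k<n. u (Suc k) (t (n - Suc k)))"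
      using less by (intro sum.cong) auto
    thus ?case using E_shift[of s n] E_shift[of t n] assms(3) by simp
  qed
qed

primrec pre :: "(nat \<Rightarrow> 'm) \<Rightarrow> nat \<Rightarrow> nat \<Rightarrow> 'm" where
  "pre t 0 = (\<lambda>_. t 0)"
| "pre t (Suc n) = (pre t n)(Suc n := t (Suc n) - (\<Sum>k<Suc n. u (Suc k) (pre t n (n - k))))"

lemma pre_stable: "m \<le> n \<Longrightarrow> pre t n m = pre t m m"
proof (induct n)
  case 0 thus ?case by simp
next
  case (Suc n)
  show ?case
  proof (cases "m = Suc n")
    case False
    hence "m \<le> n" using Suc by simp
    thus ?thesis using Suc False by simp
  qed simp
qed

definition sol :: "(nat \<Rightarrow> 'm) \<Rightarrow> nat \<Rightarrow> 'm" where "sol t n = pre t n n"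

lemma sol_0: "sol t 0 = t 0" by (simp add: sol_def)
lemma sol_Suc: "sol t (Suc n) = t (Suc n) - (\<Sum>k<Suc n. u (Suc k) (sol t (n - k)))"
proof -
  have "pre t n (n - k) = sol t (n - k)" for k unfolding sol_def by (rule pre_stable) simp
  thus ?thesis by (simp add: sol_def)
qed

lemma sol_mem: assumes "t \<in> ps_space N q" shows "sol t \<in> ps_space N q"
proof -
  have tm: "t j \<in> N q" for j using assms by (simp add: ps_space_def)
  have "sol t n \<in> N q" for n
  proof (induct n rule: less_induct)
    case (less n)
    show ?case
    proof (cases n)
      case 0 thus ?thesis by (simp add: sol_0 tm)
    next
      case (Suc m)
      have "(\<Sum>k<Suc m. u (Suc k) (sol t (m - k))) \<in> N q"
        using less Suc by (intro Nsum u_mem) auto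
      thus ?thesis using Suc by (simp add: sol_Suc Ndiff tm)
    qed
  qed
  thus ?thesis by (simp add: ps_space_def)
qed

lemma E_sol: "Eop (sol t) = t"
proof
  fix n show "Eop (sol t) n = t n"
  proof (cases n)
    case 0 thus ?thesis by (simp add: E_shift sol_0)
  next
    case (Suc m)
    have "(\<Sum>k<Suc m. u (Suc k) (sol t (Suc m - Suc k))) = (\<Sum>k<Suc m. u (Suc k) (sol t (m - k)))"
      by simp
    thus ?thesis using Suc by (simp only: E_shift sol_Suc) simp
  qed
qed

lemma E_bij: "bij_betw Eop (ps_space N q) (ps_space N q)"
proof (rule bij_betwI')
  fix x y assume "x \<in> ps_space N q" "y \<in> ps_space N q"
  thus "(Eop x = Eop y) = (x = y)" using E_inj by blast
next
  fix x assume "x \<in> ps_space N q" thus "Eop x \<in> ps_space N q" by (rule E_mem)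
next
  fix y assume "y \<in> ps_space N q"
  thus "\<exists>x\<in>ps_space N q. y = Eop x" using sol_mem E_sol by metis
qed

lemma ciso: "ciso (ps_space N) (ps_diff act dN xi1) (ps_space N) (ps_diff act dN xi2) Eop"
proof -
  interpret c1: cplx "ps_space N" "ps_diff act dN xi1" by (rule cplxPS[OF xi1 dxi1])
  interpret c2: cplx "ps_space N" "ps_diff act dN xi2" by (rule cplxPS[OF xi2 dxi2])
  show ?thesis
    by unfold_locales (auto simp: E_mem E_add E_chain E_bij)
qed

end



lemma (in cplx) coh_smul_ccls:
  assumes a: "a \<in> C k" and sadd: "\<And>x y. x \<in> C k \<Longrightarrow> y \<in> C k \<Longrightarrow> s c (x + y) = s c x + s c y"
    and sb: "\<And>b. b \<in> cobound C d k \<Longrightarrow> s c b \<in> cobound C d k"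
  shows "coh_smul s C d k c (ccls C d k a) = ccls C d k (s c a)"
proof -
  define b where "b = crep (ccls C d k a) - a"
  have b: "b \<in> cobound C d k" unfolding b_def by (rule crep_ccls)
  have "s c (crep (ccls C d k a)) = s c a + s c b"
    using sadd[OF a cob_sub[OF b]] by (simp add: b_def)
  thus ?thesis unfolding coh_smul_def
    by (intro ccls_eq) (simp add: sb[OF b])
qed

context defm begin

interpretation vN: vector_space sN by (rule vsN)

lemma tshift_mem: "w \<in> ps_space N q \<Longrightarrow> tshift w \<in> ps_space N q"
  by (simp add: ps_space_def tshift_def N0)
lemma tshift_add: "tshift ((x::nat\<Rightarrow>'m) + y) = tshift x + tshift y"
  by (simp add: tshift_def fun_eq_iff)
lemma tshift_diff: "tshift ((x::nat\<Rightarrow>'m) - y) = tshift x - tshift y"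
  by (simp add: tshift_def fun_eq_iff)
lemma tshift_inj: "tshift x = tshift y \<Longrightarrow> x = y"
proof
  fix n assume "tshift x = tshift y"
  hence "tshift x (Suc n) = tshift y (Suc n)" by simp
  thus "x n = y n" by (simp add: tshift_def)
qed

lemma tshift_D: assumes xi: "xi \<in> A 1" shows "tshift (ps_diff act dN xi w) = ps_diff act dN xi (tshift w)"
  by (auto simp: tshift_def ps_diff_def fun_eq_iff dN0 act_zr[OF xi])

lemma smul_D: assumes xi: "xi \<in> A 1" and w: "w \<in> ps_space N q"
  shows "ps_smul sN c (ps_diff act dN xi w) = ps_diff act dN xi (ps_smul sN c w)"
proof -
  have wm: "w j \<in> N q" for j using w by (simp add: ps_space_def)
  show ?thesis by (auto simp: ps_smul_def ps_diff_def fun_eq_iff dN_sc[OF wm] act_scr[OF xi wm] vN.scale_right_distrib)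
qed

lemma smul_mem: "w \<in> ps_space N q \<Longrightarrow> ps_smul sN c w \<in> ps_space N q"
  by (simp add: ps_space_def ps_smul_def Nsc)

lemma coh_smul_PS: assumes xi: "xi \<in> A 1" "dA xi = 0" and a: "a \<in> ps_space N k"
  shows "coh_smul (ps_smul sN) (ps_space N) (ps_diff act dN xi) k c (ccls (ps_space N) (ps_diff act dN xi) k a)
   = ccls (ps_space N) (ps_diff act dN xi) k (ps_smul sN c a)"
proof (rule cplx.coh_smul_ccls[OF cplxPS[OF xi] a])
  show "ps_smul sN c (x + y) = ps_smul sN c x + ps_smul sN c y" for x y
    by (simp add: ps_smul_def fun_eq_iff vN.scale_right_distrib)
  fix b assume "b \<in> cobound (ps_space N) (ps_diff act dN xi) k"
  thus "ps_smul sN c b \<in> cobound (ps_space N) (ps_diff act dN xi) k"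
  proof (cases k)
    case 0 thus ?thesis using \<open>b \<in> _\<close> by (simp add: cobound_def ps_smul_def fun_eq_iff)
  next
    case (Suc j)
    then obtain w where w: "w \<in> ps_space N j" "b = ps_diff act dN xi w" using \<open>b \<in> _\<close> by (auto simp: cobound_def)
    thus ?thesis using Suc smul_D[OF xi(1) w(1)] smul_mem[OF w(1)] by (auto simp: cobound_def)
  qed
qed

lemma coh_map_tshift: assumes xi: "xi \<in> A 1" "dA xi = 0" and a: "a \<in> ps_space N k"
  shows "coh_map (ps_space N) (ps_diff act dN xi) k tshift (ccls (ps_space N) (ps_diff act dN xi) k a)
   = ccls (ps_space N) (ps_diff act dN xi) k (tshift a)"
proof (rule coh_map_ccls[OF cplxPS[OF xi] cplxPS[OF xi] a])
  show "tshift (x + y) = tshift x + tshift y" for x y :: "nat \<Rightarrow> 'm" by (rule tshift_add)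
  fix b assume "b \<in> cobound (ps_space N) (ps_diff act dN xi) k"
  thus "tshift b \<in> cobound (ps_space N) (ps_diff act dN xi) k"
  proof (cases k)
    case 0 thus ?thesis using \<open>b \<in> _\<close> by (simp add: cobound_def tshift_def fun_eq_iff)
  next
    case (Suc j)
    then obtain w where w: "w \<in> ps_space N j" "b = ps_diff act dN xi w" using \<open>b \<in> _\<close> by (auto simp: cobound_def)
    thus ?thesis using Suc tshift_D[OF xi(1), of w] tshift_mem[OF w(1)] by (auto simp: cobound_def)
  qed
qed

lemma coh_map_ev0: assumes xi: "xi \<in> A 1" "dA xi = 0" and a: "a \<in> ps_space N k"
  shows "coh_map N dN k ev0 (ccls (ps_space N) (ps_diff act dN xi) k a) = ccls N dN k (ev0 a)"
proof (rule coh_map_ccls[OF cplxPS[OF xi] cplxN a])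
  show "ev0 (x + y) = ev0 x + ev0 y" for x y :: "nat \<Rightarrow> 'm" by (simp add: ev0_def)
  fix b assume "b \<in> cobound (ps_space N) (ps_diff act dN xi) k"
  thus "ev0 b \<in> cobound N dN k"
    by (cases k) (auto simp: cobound_def ev0_def ps_diff_def ps_space_def)
qed

lemma conn_ex: assumes xi: "xi \<in> A 1" and y: "y \<in> cocyc N dN k"
  shows "\<exists>a. a \<in> ps_space N (Suc k) \<and> (\<exists>b\<in>ps_space N k. ev0 b = y \<and> tshift a = ps_diff act dN xi b)"
proof -
  have ym: "y \<in> N k" and dy: "dN y = 0" using y by (auto simp: cocyc_def)
  define b where "b = (\<lambda>n::nat. if n = 0 then y else 0)"
  define a where "a = (\<lambda>n::nat. if n = 0 then act xi y else 0)"
  have "a \<in> ps_space N (Suc k)" using act_mem[OF xi ym] by (auto simp: a_def ps_space_def N0)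
  moreover have "b \<in> ps_space N k" using ym by (auto simp: b_def ps_space_def N0)
  moreover have "tshift a = ps_diff act dN xi b"
  proof
    fix n show "tshift a n = ps_diff act dN xi b n"
      by (cases n; cases "n - 1") (auto simp: tshift_def ps_diff_def a_def b_def dy dN0 act_zr[OF xi])
  qed
  moreover have "ev0 b = y" by (simp add: ev0_def b_def)
  ultimately show ?thesis by blast
qed

end



context defm begin

lemma main: "couple_iso (deformation_couple sN N act dN xi1) (deformation_couple sN N act dN xi2)"
proof -
  interpret ci: ciso "ps_space N" "ps_diff act dN xi1" "ps_space N" "ps_diff act dN xi2" Eop by (rule ciso)
  interpret cN: cplx N dN by (rule cplxN)
  let ?PS = "ps_space N" and ?D1 = "ps_diff act dN xi1" and ?D2 = "ps_diff act dN xi2"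
  define phi where "phi = (\<lambda>k. coh_map ?PS ?D2 k Eop)"
  have elem: "\<exists>x. x \<in> ?PS k \<and> X = ccls ?PS ?D1 k x" if "X \<in> coh ?PS ?D1 k" for X k
    using ci.c1.coh_elem[OF that] by (auto simp: cocyc_def)
  have phic: "phi k (ccls ?PS ?D1 k x) = ccls ?PS ?D2 k (Eop x)" if "x \<in> ?PS k" for x k
    unfolding phi_def by (rule ci.phi_ccls[OF that])
  have F1: "bij_betw (phi k) (coh ?PS ?D1 k) (coh ?PS ?D2 k)" for k
    unfolding phi_def by (rule ci.phi_bij)
  have F2: "phi k (coh_add ?PS ?D1 k X Y) = coh_add ?PS ?D2 k (phi k X) (phi k Y)"
    if XY: "X \<in> coh ?PS ?D1 k" "Y \<in> coh ?PS ?D1 k" for X Y k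
  proof -
    obtain x y where xy: "x \<in> ?PS k" "X = ccls ?PS ?D1 k x" "y \<in> ?PS k" "Y = ccls ?PS ?D1 k y"
      using elem[OF XY(1)] elem[OF XY(2)] by blast
    show ?thesis using xy
      by (simp add: ci.c1.coh_add_ccls ci.c2.coh_add_ccls phic ci.c1.add ci.Eadd)
  qed
  have F3: "phi k (coh_smul (ps_smul sN) ?PS ?D1 k c X) = coh_smul (ps_smul sN) ?PS ?D2 k c (phi k X)"
    if XX: "X \<in> coh ?PS ?D1 k" for X k c
  proof -
    obtain x where x: "x \<in> ?PS k" "X = ccls ?PS ?D1 k x" using elem[OF XX] by blast
    show ?thesis using x
      by (simp add: coh_smul_PS[OF xi1 dxi1] coh_smul_PS[OF xi2 dxi2] phic smul_mem E_sc E_mem)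
  qed
  have F4: "phi k (coh_map ?PS ?D1 k tshift X) = coh_map ?PS ?D2 k tshift (phi k X)"
    if XX: "X \<in> coh ?PS ?D1 k" for X k
  proof -
    obtain x where x: "x \<in> ?PS k" "X = ccls ?PS ?D1 k x" using elem[OF XX] by blast
    show ?thesis using x
      by (simp add: coh_map_tshift[OF xi1 dxi1] coh_map_tshift[OF xi2 dxi2] phic tshift_mem E_tshift E_mem)
  qed
  have F5: "coh_map N dN k ev0 X = coh_map N dN k ev0 (phi k X)"
    if XX: "X \<in> coh ?PS ?D1 k" for X k
  proof -
    obtain x where x: "x \<in> ?PS k" "X = ccls ?PS ?D1 k x" using elem[OF XX] by blast
    show ?thesis using x
      by (simp add: coh_map_ev0[OF xi1 dxi1] coh_map_ev0[OF xi2 dxi2] phic E_ev0 E_mem)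
  qed
  have F6: "phi (Suc k) (coh_conn ?PS ?D1 ?PS ?D1 tshift ev0 k Y) = coh_conn ?PS ?D2 ?PS ?D2 tshift ev0 k Y"
    if "Y \<in> coh N dN k" for Y k
  proof -
    have y: "crep Y \<in> cocyc N dN k" using cN.coh_elem[OF that] by blast
    define a1 where "a1 = (SOME a. a \<in> ?PS (Suc k) \<and> (\<exists>b\<in>?PS k. ev0 b = crep Y \<and> tshift a = ?D1 b))"
    define a2 where "a2 = (SOME a. a \<in> ?PS (Suc k) \<and> (\<exists>b\<in>?PS k. ev0 b = crep Y \<and> tshift a = ?D2 b))"
    have "a1 \<in> ?PS (Suc k) \<and> (\<exists>b\<in>?PS k. ev0 b = crep Y \<and> tshift a1 = ?D1 b)"
      unfolding a1_def by (rule someI_ex[OF conn_ex[OF xi1 y]])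
    then obtain b1 where a1: "a1 \<in> ?PS (Suc k)" "b1 \<in> ?PS k" "ev0 b1 = crep Y" "tshift a1 = ?D1 b1" by blast
    have "a2 \<in> ?PS (Suc k) \<and> (\<exists>b\<in>?PS k. ev0 b = crep Y \<and> tshift a2 = ?D2 b)"
      unfolding a2_def by (rule someI_ex[OF conn_ex[OF xi2 y]])
    then obtain b2 where a2: "a2 \<in> ?PS (Suc k)" "b2 \<in> ?PS k" "ev0 b2 = crep Y" "tshift a2 = ?D2 b2" by blast
    define c where "c = Eop b1 - b2"
    have cm: "c \<in> ?PS k" unfolding c_def by (rule ci.c2.diff[OF ci.Emap[OF a1(2)] a2(2)])
    have c0: "c 0 = 0" using a1(3) a2(3) E_ev0[of b1] by (simp add: c_def ev0_def)
    define w where "w = (\<lambda>n. c (Suc n))"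
    have wm: "w \<in> ?PS k" using cm by (simp add: w_def ps_space_def)
    have tw: "tshift w = c" using c0 by (auto simp: tshift_def w_def fun_eq_iff)
    have "tshift (Eop a1 - a2) = Eop (tshift a1) - tshift a2" by (simp add: tshift_diff E_tshift)
    also have "\<dots> = ?D2 (Eop b1) - ?D2 b2" using a1(4) a2(4) ci.Ed[OF a1(2)] by simp
    also have "\<dots> = ?D2 c" unfolding c_def by (rule ci.c2.ddiff[OF ci.Emap[OF a1(2)] a2(2), symmetric])
    also have "\<dots> = tshift (?D2 w)" using tw tshift_D[OF xi2, of w] by simp
    finally have "Eop a1 - a2 = ?D2 w" by (rule tshift_inj)
    hence "Eop a1 - a2 \<in> cobound ?PS ?D2 (Suc k)" using wm by (simp add: cobound_def)
    hence "ccls ?PS ?D2 (Suc k) (Eop a1) = ccls ?PS ?D2 (Suc k) a2" by (rule ci.c2.ccls_eq)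
    thus ?thesis unfolding coh_conn_def a1_def[symmetric] a2_def[symmetric] phic[OF a1(1)] .
  qed
  show ?thesis
    unfolding couple_iso_def deformation_couple_def Let_def vs_couple.simps
    apply (rule exI[where x=phi], rule exI[where x="\<lambda>k. id"])
    apply (intro allI conjI ballI)
    using F1 F2 F3 F4 F5 F6 by (auto simp: bij_betw_id)
qed

end

theorem proposition3p1:
  fixes sA :: "'k::field_char_0 \<Rightarrow> 'a::ab_group_add \<Rightarrow> 'a"
    and A :: "nat \<Rightarrow> 'a set" and mul :: "'a \<Rightarrow> 'a \<Rightarrow> 'a" and one :: 'a and dA :: "'a \<Rightarrow> 'a"
    and sN :: "'k \<Rightarrow> 'm::ab_group_add \<Rightarrow> 'm"
    and N :: "nat \<Rightarrow> 'm set" and act :: "'a \<Rightarrow> 'm \<Rightarrow> 'm" and dN :: "'m \<Rightarrow> 'm"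
    and xi1 xi2 f :: 'a
  assumes "cdga sA A mul one dA"
    and "dgm sA A mul one dA sN N act dN"
    and "xi1 \<in> A 1" and "dA xi1 = 0"
    and "xi2 \<in> A 1" and "dA xi2 = 0"
    and "f \<in> A 0" and "xi1 - xi2 = dA f"
  shows "couple_iso (deformation_couple sN N act dN xi1) (deformation_couple sN N act dN xi2)"
proof -
  interpret defm sA A mul one dA sN N act dN xi1 xi2 f using assms by unfold_locales
  show ?thesis by (rule main)
qed



end
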